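(* For every real number $\alpha\ge 1$ there exist real numbers $\alpha_0\le\alpha<\alpha_1$ such that, with $I_\alpha=[\alpha_0,\alpha_1)$: for every $\beta\in I_\alpha$ the sequences $(P^\beta_i)_{i\ge0}$ and $(P^\alpha_i)_{i\ge0}$ are identical, and for every real $\beta\ge 1$ with $\beta\notin I_\alpha$ the two sequences are not identical, i.e.\ there is an index $i$ with $P^\alpha_i\neq P^\beta_i$.
   Context: For a real number $\alpha\ge 1$, define the integer sequence $(P^\alpha_i)_{i\ge 0}$ by $P^\alpha_0=0$, $P^\alpha_1=1$, and for $k\ge 1$, $P^\alpha_{k+1}=P^\alpha_k+P^\alpha_j$, where $j\ge1$ is the unique index with $\alpha P^\alpha_{j-1}<P^\alpha_k\le \alpha P^\alpha_j$. (By a theorem of Schwenk, the terms of this sequence are exactly the pile sizes $n$ for which the initial position of $\alpha$-\textsc{tag} is a second-player win, where $\alpha$-\textsc{tag} is the game: a single pile of $n$ stones; players alternately remove at least one stone; the first move removes at most $n-1$ stones; each later move removes at most $\alpha$ times the number removed on the previous move; the player unable to move loses.) *)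

theory Defs
  imports Complex_Main
begin

(* P_0 = 0, P_1 = 1, P_{k+1} = P_k + P_j where j >= 1 is the unique index with
   alpha * P_{j-1} < P_k <= alpha * P_j.  Such j necessarily satisfies j <= k (since
   alpha >= 1 gives P_k <= alpha * P_k), so the index is searched among already computed terms. *)
fun Ptag_list :: "real \<Rightarrow> nat \<Rightarrow> nat list" where
  "Ptag_list \<alpha> 0 = [0]"
| "Ptag_list \<alpha> (Suc 0) = [0, 1]"
| "Ptag_list \<alpha> (Suc (Suc k)) =
     (let xs = Ptag_list \<alpha> (Suc k); pk = xs ! Suc k;
          j = (THE j. 1 \<le> j \<and> j \<le> Suc k \<and>
                      \<alpha> * real (xs ! (j - 1)) < real pk \<and> real pk \<le> \<alpha> * real (xs ! j))
      in xs @ [pk + xs ! j])"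

definition Ptag :: "real \<Rightarrow> nat \<Rightarrow> nat" where
  "Ptag \<alpha> i = Ptag_list \<alpha> i ! i"

end

theory Submission
  imports Defs
begin

lemma Ptag_list_len: "length (Ptag_list a n) = Suc n"
  by (induction a n rule: Ptag_list.induct) (auto simp: Let_def)

lemma Ptag_list_snoc: "Ptag_list a (Suc n) = Ptag_list a n @ [Ptag a (Suc n)]"
proof -
  have "\<exists>v. Ptag_list a (Suc n) = Ptag_list a n @ [v]"
    by (cases n) (auto simp: Let_def)
  then obtain v where v: "Ptag_list a (Suc n) = Ptag_list a n @ [v]" by blast
  have "Ptag a (Suc n) = v" unfolding Ptag_def v by (simp add: nth_append Ptag_list_len)
  with v show ?thesis by simp
qed

lemma Ptag_list_nth: "i \<le> n \<Longrightarrow> Ptag_list a n ! i = Ptag a i"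
proof (induction n)
  case 0 then show ?case by (simp add: Ptag_def)
next
  case (Suc n)
  show ?case
  proof (cases "i \<le> n")
    case True
    then show ?thesis using Suc by (simp add: Ptag_list_snoc nth_append Ptag_list_len)
  next
    case False
    then have "i = Suc n" using Suc by simp
    then show ?thesis by (simp add: Ptag_def)
  qed
qed

lemma Ptag0: "Ptag a 0 = 0" by (simp add: Ptag_def)
lemma Ptag1: "Ptag a 1 = 1" by (simp add: Ptag_def)
lemma Ptag1': "Ptag a (Suc 0) = 1" by (simp add: Ptag_def)

definition jidx :: "real \<Rightarrow> nat \<Rightarrow> nat" where
  "jidx a k = (THE j. 1 \<le> j \<and> j \<le> k \<and> a * real (Ptag a (j-1)) < real (Ptag a k)
      \<and> real (Ptag a k) \<le> a * real (Ptag a j))"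

lemma Ptag_step:
  assumes "k \<ge> 1" "jidx a k \<le> k"
  shows "Ptag a (Suc k) = Ptag a k + Ptag a (jidx a k)"
proof -
  obtain k' where k: "k = Suc k'" using assms(1) by (cases k) auto
  let ?xs = "Ptag_list a (Suc k')"
  have eq: "(\<lambda>j. 1 \<le> j \<and> j \<le> Suc k' \<and> a * real (?xs ! (j - 1)) < real (?xs ! Suc k')
        \<and> real (?xs ! Suc k') \<le> a * real (?xs ! j)) =
      (\<lambda>j. 1 \<le> j \<and> j \<le> Suc k' \<and> a * real (Ptag a (j-1)) < real (Ptag a (Suc k'))
      \<and> real (Ptag a (Suc k')) \<le> a * real (Ptag a j))"
    by (rule ext) (auto simp: Ptag_list_nth)
  have "Ptag_list a (Suc (Suc k')) = ?xs @ [Ptag a (Suc k') + ?xs ! jidx a (Suc k')]"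
    by (simp only: Ptag_list.simps Let_def eq jidx_def) (simp add: Ptag_list_nth)
  then have "Ptag a (Suc (Suc k')) = Ptag a (Suc k') + ?xs ! jidx a (Suc k')"
    by (simp add: Ptag_def nth_append Ptag_list_len)
  also have "?xs ! jidx a (Suc k') = Ptag a (jidx a (Suc k'))"
    using assms(2) k by (simp add: Ptag_list_nth)
  finally show ?thesis using k by simp
qed

lemma chain_less:
  fixes f :: "nat \<Rightarrow> nat"
  assumes "\<forall>i<N. f i < f (Suc i)" "i < i'" "i' \<le> N"
  shows "f i < f i'"
  using assms(2,3)
proof (induction i')
  case 0 then show ?case by simp
next
  case (Suc i')
  then show ?case using assms(1)
    by (metis Suc_le_lessD le_less_trans less_Suc_eq order.strict_trans1 order_less_imp_le)
qed

lemma chain_le: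
  fixes f :: "nat \<Rightarrow> nat"
  assumes "\<forall>i<N. f i < f (Suc i)" "i \<le> i'" "i' \<le> N"
  shows "f i \<le> f i'"
  using chain_less[OF assms(1) _ assms(3), of i] assms(2) by (cases "i = i'") auto

lemma interval_exists:
  fixes f :: "nat \<Rightarrow> nat" and g :: real
  assumes g: "g > 0" and ch: "\<forall>i<N. f i < f (Suc i)" and f0: "f 0 = 0" and x: "0 < x" "x \<le> g * f N"
  shows "\<exists>!j. 1 \<le> j \<and> j \<le> N \<and> g * f (j-1) < x \<and> x \<le> g * f j"
proof -
  define j where "j = (LEAST j. x \<le> g * f j)"
  have j1: "x \<le> g * f j" unfolding j_def by (rule LeastI[of _ N]) (use x in simp)
  have jN: "j \<le> N" unfolding j_def by (rule Least_le) (use x in simp)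
  have jpos: "j \<ge> 1" using j1 x f0 by (cases j) auto
  have j2: "g * f (j-1) < x"
  proof -
    have "\<not> x \<le> g * f (j-1)" unfolding j_def
      by (rule not_less_Least) (use jpos in \<open>simp add: j_def[symmetric]\<close>)
    then show ?thesis by simp
  qed
  show ?thesis
  proof (rule ex1I[of _ j])
    show "1 \<le> j \<and> j \<le> N \<and> g * f (j-1) < x \<and> x \<le> g * f j" using jpos jN j1 j2 by simp
  next
    fix j' assume h: "1 \<le> j' \<and> j' \<le> N \<and> g * f (j'-1) < x \<and> x \<le> g * f j'"
    show "j' = j"
    proof (rule ccontr)
      assume "j' \<noteq> j"
      then consider "j' < j" | "j < j'" by linarith
      then show False
      proof cases
        case 1
        then have "f j' \<le> f (j-1)" using chain_le[OF ch, of j' "j-1"] jN by simp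
        then have "g * f j' \<le> g * f (j-1)" using g by simp
        then show False using h j2 by simp
      next
        case 2
        then have "f j \<le> f (j'-1)" using chain_le[OF ch, of j "j'-1"] h by auto
        then have "g * f j \<le> g * f (j'-1)" using g by simp
        then show False using h j1 by simp
      qed
    qed
  qed
qed


lemma jidx_props_upto:
  assumes g: "g \<ge> 1" and k: "k \<ge> 1" and ch: "\<forall>i<k. Ptag g i < Ptag g (Suc i)"
  shows "1 \<le> jidx g k \<and> jidx g k \<le> k \<and> g * real (Ptag g (jidx g k - 1)) < real (Ptag g k)
      \<and> real (Ptag g k) \<le> g * real (Ptag g (jidx g k))"
proof -
  have pos: "0 < Ptag g k" using chain_less[OF ch, of 0 k] k by (simp add: Ptag0)
  have le: "real (Ptag g k) \<le> g * real (Ptag g k)" using g mult_right_mono[of 1 g "real (Ptag g k)"] by simp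
  have "\<exists>!j. 1 \<le> j \<and> j \<le> k \<and> g * real (Ptag g (j-1)) < real (Ptag g k) \<and> real (Ptag g k) \<le> g * real (Ptag g j)"
    by (rule interval_exists[OF _ ch]) (use g pos le in \<open>auto simp: Ptag0\<close>)
  then show ?thesis unfolding jidx_def by (rule theI')
qed

lemma Ptag_inc_upto: "g \<ge> 1 \<Longrightarrow> \<forall>i<n. Ptag g i < Ptag g (Suc i)"
proof (induction n)
  case 0 then show ?case by simp
next
  case (Suc n)
  have "Ptag g n < Ptag g (Suc n)"
  proof (cases "n = 0")
    case True then show ?thesis by (simp add: Ptag0 Ptag_def)
  next
    case False
    then have n1: "n \<ge> 1" by simp
    have J: "1 \<le> jidx g n \<and> jidx g n \<le> n" using jidx_props_upto[OF Suc.prems n1] Suc by simp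
    have "0 < Ptag g (jidx g n)"
      using chain_less[of n "Ptag g" 0 "jidx g n"] Suc J by (simp add: Ptag0)
    then show ?thesis using Ptag_step[OF n1] J by simp
  qed
  then show ?case using Suc by (simp add: less_Suc_eq)
qed

lemma Ptag_smono: "g \<ge> 1 \<Longrightarrow> strict_mono (Ptag g)"
  using Ptag_inc_upto by (metis lessI strict_mono_Suc_iff)

lemma jidx_props:
  assumes "g \<ge> 1" "k \<ge> 1"
  shows "1 \<le> jidx g k \<and> jidx g k \<le> k \<and> g * real (Ptag g (jidx g k - 1)) < real (Ptag g k)
      \<and> real (Ptag g k) \<le> g * real (Ptag g (jidx g k))"
  using jidx_props_upto[OF assms] Ptag_inc_upto[OF assms(1)] by blast

lemma Ptag_step':
  assumes "g \<ge> 1" "k \<ge> 1"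
  shows "Ptag g (Suc k) = Ptag g k + Ptag g (jidx g k)"
  using Ptag_step[OF assms(2)] jidx_props[OF assms] by blast

lemma jidx_unique:
  assumes g: "g \<ge> 1" and k: "k \<ge> 1" and j: "j \<ge> 1"
    "g * real (Ptag g (j-1)) < real (Ptag g k)" "real (Ptag g k) \<le> g * real (Ptag g j)"
  shows "j = jidx g k"
proof (rule ccontr)
  let ?J = "jidx g k"
  have sm: "strict_mono (Ptag g)" by (rule Ptag_smono[OF g])
  have JP: "1 \<le> ?J" "g * real (Ptag g (?J - 1)) < real (Ptag g k)" "real (Ptag g k) \<le> g * real (Ptag g ?J)"
    using jidx_props[OF g k] by auto
  assume "j \<noteq> ?J"
  then consider "j < ?J" | "?J < j" by linarith
  then show False
  proof cases
    case 1
    then have "Ptag g j \<le> Ptag g (?J - 1)" using sm by (simp add: strict_mono_less_eq)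
    then have "g * Ptag g j \<le> g * Ptag g (?J - 1)" using g by simp
    then show False using j JP by simp
  next
    case 2
    then have "Ptag g ?J \<le> Ptag g (j - 1)" using sm by (simp add: strict_mono_less_eq)
    then have "g * Ptag g ?J \<le> g * Ptag g (j - 1)" using g by simp
    then show False using j JP by simp
  qed
qed


lemma jidx_mono:
  assumes g: "g \<ge> 1" and k: "k \<ge> 1"
  shows "jidx g k \<le> jidx g (Suc k) \<and> jidx g (Suc k) \<le> Suc (jidx g k)"
proof -
  let ?P = "Ptag g" and ?J = "jidx g"
  have sm: "strict_mono ?P" by (rule Ptag_smono[OF g])
  have k1: "Suc k \<ge> 1" by simp
  note A = jidx_props[OF g k] and B = jidx_props[OF g k1]
  have st: "?P (Suc k) = ?P k + ?P (?J k)" by (rule Ptag_step'[OF g k])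
  have inc: "?P k < ?P (Suc k)" using sm by (simp add: strict_mono_def)
  have 1: "?J k \<le> ?J (Suc k)"
  proof (rule ccontr)
    assume "\<not> ?thesis"
    then have "?J (Suc k) \<le> ?J k - 1" by simp
    then have "?P (?J (Suc k)) \<le> ?P (?J k - 1)" using sm by (simp add: strict_mono_less_eq)
    then have "g * ?P (?J (Suc k)) \<le> g * ?P (?J k - 1)" using g by simp
    then show False using A B inc by linarith
  qed
  have 2: "?J (Suc k) \<le> Suc (?J k)"
  proof (rule ccontr)
    assume "\<not> ?thesis"
    then have "Suc (?J k) \<le> ?J (Suc k) - 1" by simp
    then have "?P (Suc (?J k)) \<le> ?P (?J (Suc k) - 1)" using sm by (simp add: strict_mono_less_eq)
    then have a: "g * ?P (Suc (?J k)) \<le> g * ?P (?J (Suc k) - 1)" using g by simp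
    have J1: "?J k \<ge> 1" using A by simp
    have st2: "?P (Suc (?J k)) = ?P (?J k) + ?P (?J (?J k))" by (rule Ptag_step'[OF g J1])
    have c: "real (?P (?J k)) \<le> g * ?P (?J (?J k))" using jidx_props[OF g J1] by simp
    have "g * real (?P (Suc (?J k))) = g * ?P (?J k) + g * ?P (?J (?J k))"
      using st2 by (simp add: algebra_simps)
    then have "g * real (?P (Suc (?J k))) \<ge> g * ?P (?J k) + ?P (?J k)" using c by linarith
    moreover have "real (?P (Suc k)) = ?P k + ?P (?J k)" using st by simp
    ultimately show False using a A B by linarith
  qed
  show ?thesis using 1 2 by simp
qed

lemma growth_pow:
  assumes g: "g \<ge> 1" and j: "j \<ge> 1"
  shows "(g+1)^n * real (Ptag g j) \<le> g^n * real (Ptag g (j+n))"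
proof (induction n)
  case 0 then show ?case by simp
next
  case (Suc n)
  have jn: "j + n \<ge> 1" using j by simp
  have st: "Ptag g (Suc (j+n)) = Ptag g (j+n) + Ptag g (jidx g (j+n))" by (rule Ptag_step'[OF g jn])
  have c: "real (Ptag g (j+n)) \<le> g * Ptag g (jidx g (j+n))" using jidx_props[OF g jn] by simp
  have one: "(g+1) * real (Ptag g (j+n)) \<le> g * real (Ptag g (Suc (j+n)))"
    using st c by (simp add: algebra_simps)
  have "(g+1)^Suc n * real (Ptag g j) = (g+1) * ((g+1)^n * real (Ptag g j))" by simp
  also have "\<dots> \<le> (g+1) * (g^n * real (Ptag g (j+n)))"
    using Suc.IH g by (intro mult_left_mono) auto
  also have "\<dots> = g^n * ((g+1) * real (Ptag g (j+n)))" by (simp add: algebra_simps)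
  also have "\<dots> \<le> g^n * (g * real (Ptag g (Suc (j+n))))"
    using one g by (intro mult_left_mono) auto
  also have "\<dots> = g^Suc n * real (Ptag g (j + Suc n))" by simp
  finally show ?case .
qed

lemma dist_bound:
  assumes g: "g \<ge> 1" and k: "k \<ge> 1"
  shows "real (k - jidx g k) \<le> g * g"
proof -
  let ?J = "jidx g k" and ?n = "k - jidx g k"
  have A: "1 \<le> ?J" "?J \<le> k" "real (Ptag g k) \<le> g * Ptag g ?J" using jidx_props[OF g k] by auto
  have kk: "?J + ?n = k" using A by simp
  have pos: "real (Ptag g ?J) > 0"
    proof -
    have "Ptag g 0 < Ptag g ?J" using Ptag_smono[OF g] A(1) by (simp add: strict_mono_less)
    then show ?thesis by (simp add: Ptag0)
  qed
  have "(g+1)^?n * real (Ptag g ?J) \<le> g^?n * real (Ptag g k)"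
    using growth_pow[OF g A(1), of ?n] kk by simp
  also have "\<dots> \<le> g^?n * (g * Ptag g ?J)" using A(3) g by (intro mult_left_mono) auto
  finally have "(g+1)^?n * real (Ptag g ?J) \<le> (g^?n * g) * Ptag g ?J" by (simp add: algebra_simps)
  then have "(g+1)^?n \<le> g^?n * g" using pos by simp
  then have "(g+1)^?n / g^?n \<le> g" using g by (simp add: divide_le_eq mult.commute)
  moreover have "1 + 1/g = (g+1)/g" using g by (simp add: field_simps)
  ultimately have le: "(1 + 1/g)^?n \<le> g" by (simp add: power_divide)
  have "1 + real ?n * (1/g) \<le> (1 + 1/g)^?n" proof (rule Bernoulli_inequality)
    have "0 \<le> 1/g" using g by simp
    then show "-1 \<le> 1/g" by linarith
  qed
  then have "1 + real ?n / g \<le> g" using le by simp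
  then have "real ?n / g \<le> g" by linarith
  then show ?thesis using g by (simp add: divide_le_eq)
qed

lemma eventually_const:
  fixes d :: "nat \<Rightarrow> nat"
  assumes mono: "\<And>k. k \<ge> 1 \<Longrightarrow> d k \<le> d (Suc k)" and bd: "\<And>k. k \<ge> 1 \<Longrightarrow> d k \<le> B"
  shows "\<exists>K\<ge>1. \<exists>m. \<forall>k\<ge>K. d k = m"
proof -
  let ?S = "d ` {1..}"
  have sub: "?S \<subseteq> {..B}" using bd by blast
  have fin: "finite ?S" by (rule finite_subset[OF sub]) simp
  have ne: "?S \<noteq> {}" by blast
  have "Max ?S \<in> ?S" by (rule Max_in[OF fin ne])
  then obtain K where K: "K \<ge> 1" "d K = Max ?S" by (metis atLeast_iff imageE)
  have "\<forall>k\<ge>K. d k = Max ?S"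
  proof (intro allI impI)
    fix k assume "K \<le> k"
    then have "d K \<le> d k"
    proof (induction k rule: dec_induct)
      case base then show ?case by simp
    next
      case (step k) then show ?case using mono[of k] K(1) by simp
    qed
    moreover have "d k \<in> ?S" using \<open>K \<le> k\<close> K(1) by simp
    then have "d k \<le> Max ?S" using fin by (rule Max_ge[rotated])
    ultimately show "d k = Max ?S" using K by simp
  qed
  then show ?thesis using K(1) by blast
qed

lemma finite_delta:
  fixes h :: "nat \<Rightarrow> real"
  assumes "\<And>k. 1 \<le> k \<Longrightarrow> k \<le> N \<Longrightarrow> 0 < h k"
  shows "\<exists>\<delta>>0. \<forall>k. 1 \<le> k \<and> k \<le> N \<longrightarrow> \<delta> \<le> h k"
  using assms
proof (induction N)
  case 0 then show ?case by (intro exI[of _ 1]) auto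
next
  case (Suc N)
  have "\<And>k. 1 \<le> k \<Longrightarrow> k \<le> N \<Longrightarrow> 0 < h k" using Suc.prems by simp
  then obtain \<delta> where d: "\<delta> > 0" "\<forall>k. 1 \<le> k \<and> k \<le> N \<longrightarrow> \<delta> \<le> h k"
    using Suc.IH by blast
  have hN: "0 < h (Suc N)" using Suc.prems by simp
  show ?case
  proof (intro exI[of _ "min \<delta> (h (Suc N))"] conjI allI impI)
    show "0 < min \<delta> (h (Suc N))" using d hN by simp
  next
    fix k assume k: "1 \<le> k \<and> k \<le> Suc N"
    show "min \<delta> (h (Suc N)) \<le> h k"
    proof (cases "k = Suc N")
      case True then show ?thesis by simp
    next
      case False then show ?thesis using k d by (simp add: min.coboundedI1)
    qed
  qed
qed


lemma nat_le_ceil: "real n \<le> x \<Longrightarrow> n \<le> nat \<lceil>x\<rceil>"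
  by linarith

lemma key:
  assumes g: "g \<ge> 1"
  shows "\<exists>\<delta>>0. \<forall>k\<ge>1. (g+\<delta>) * real (Ptag g (jidx g k - 1)) \<le> real (Ptag g k)"
proof -
  define P where "P = Ptag g"
  define J where "J = jidx g"
  have sm: "strict_mono P" unfolding P_def by (rule Ptag_smono[OF g])
  have Jp: "\<And>k. k \<ge> 1 \<Longrightarrow> 1 \<le> J k \<and> J k \<le> k \<and> g * real (P (J k - 1)) < real (P k)
      \<and> real (P k) \<le> g * real (P (J k))"
    unfolding P_def J_def by (rule jidx_props[OF g])
  have st: "\<And>k. k \<ge> 1 \<Longrightarrow> P (Suc k) = P k + P (J k)"
    unfolding P_def J_def by (rule Ptag_step'[OF g])
  have Ppos: "\<And>k. k \<ge> 1 \<Longrightarrow> real (P k) > 0"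
  proof -
    fix k :: nat assume "k \<ge> 1"
    then have "P 0 < P k" using sm by (simp add: strict_mono_less)
    then show "real (P k) > 0" by (simp add: P_def Ptag0)
  qed
  have Pmono: "\<And>i i'. i \<le> i' \<Longrightarrow> P i \<le> P i'" using sm by (simp add: strict_mono_less_eq)
  have "\<exists>K\<ge>1. \<exists>m. \<forall>k\<ge>K. (\<lambda>k. k - J k) k = m"
  proof (rule eventually_const[where B = "nat \<lceil>g*g\<rceil>"])
    fix k :: nat assume k: "k \<ge> 1"
    show "k - J k \<le> Suc k - J (Suc k)" using jidx_mono[OF g k] Jp[OF k] unfolding J_def by linarith
    show "k - J k \<le> nat \<lceil>g*g\<rceil>" using dist_bound[OF g k] unfolding J_def by (rule nat_le_ceil)
  qed
  then obtain K m where K: "K \<ge> 1" "\<And>k. k \<ge> K \<Longrightarrow> k - J k = m" by auto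
  have JK: "\<And>k. k \<ge> K \<Longrightarrow> J k = k - m \<and> k \<ge> m + 1"
  proof -
    fix k assume k: "k \<ge> K"
    then have "k \<ge> 1" using K by simp
    then show "J k = k - m \<and> k \<ge> m + 1" using Jp[of k] K(2)[OF k] by auto
  qed
  define F where "F k = real (P k) - g * real (P (J k - 1))" for k
  have Fpos: "\<And>k. k \<ge> 1 \<Longrightarrow> F k > 0" unfolding F_def using Jp by fastforce
  have Prec: "\<And>k. k \<ge> K \<Longrightarrow> P (Suc k) = P k + P (k - m)"
    using st JK K(1) by (metis le_trans)
  have Frec: "\<And>k. k \<ge> K + m + 1 \<Longrightarrow> F (Suc k) = F k + F (k - m)"
  proof -
    fix k assume k: "k \<ge> K + m + 1"
    have a: "J (Suc k) = Suc k - m" using JK[of "Suc k"] k by simp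
    have b: "J k = k - m" using JK[of k] k by simp
    have c: "J (k - m) = k - m - m" using JK[of "k - m"] k by simp
    have d: "J (k - m - 1) = k - m - 1 - m" and d2: "k - m - 1 \<ge> m + 1" using JK[of "k - m - 1"] k by auto
    have e: "P (Suc k) = P k + P (k - m)" using Prec[of k] k by simp
    have f: "P (k - m) = P (k - m - 1) + P (k - m - 1 - m)"
    proof -
      have "k - m = Suc (k - m - 1)" using k by simp
      then have "P (k - m) = P (Suc (k - m - 1))" by simp
      also have "\<dots> = P (k - m - 1) + P (J (k - m - 1))" using st[of "k - m - 1"] d2 by simp
      finally show ?thesis using d by simp
    qed
    have i1: "Suc k - m - 1 = k - m" using k by simp
    have i2: "k - m - m - 1 = k - m - 1 - m" by simp
    have "F (Suc k) = real (P k) + real (P (k - m)) - g * real (P (k - m))"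
      unfolding F_def a i1 e by simp
    also have "\<dots> = F k + F (k - m)"
      unfolding F_def b c i2 using f by (simp add: algebra_simps)
    finally show "F (Suc k) = F k + F (k - m)" .
  qed
  define N where "N = K + m + 1"
  obtain \<delta> where d: "\<delta> > 0" "\<forall>k. 1 \<le> k \<and> k \<le> N \<longrightarrow> \<delta> \<le> F k / real (P k)"
    using finite_delta[of N "\<lambda>k. F k / real (P k)"] Fpos Ppos by force
  have all: "\<forall>k\<ge>1. \<delta> * real (P k) \<le> F k"
  proof (intro allI)
    fix k show "k \<ge> 1 \<longrightarrow> \<delta> * real (P k) \<le> F k"
    proof (induction k rule: less_induct)
      case (less k)
      show ?case
      proof (intro impI)
        assume k1: "k \<ge> 1"
        show "\<delta> * real (P k) \<le> F k"
        proof (cases "k \<le> N")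
          case True
          then have "\<delta> \<le> F k / real (P k)" using d k1 by simp
          then show ?thesis using Ppos[OF k1] by (simp add: le_divide_eq)
        next
          case False
          then obtain k' where k': "k = Suc k'" "k' \<ge> N" by (cases k) auto
          have h1: "\<delta> * real (P k') \<le> F k'" using less.IH[of k'] k' N_def by simp
          have h2: "\<delta> * real (P (k' - m)) \<le> F (k' - m)" using less.IH[of "k' - m"] k' N_def by simp
          have "F k = F k' + F (k' - m)" using Frec[of k'] k' N_def by simp
          moreover have "real (P k) = real (P k') + real (P (k' - m))" using Prec[of k'] k' N_def by simp
          ultimately show ?thesis using h1 h2 by (simp add: algebra_simps)
        qed
      qed
    qed
  qed
  show ?thesis
  proof (intro exI[of _ \<delta>] conjI allI impI)
    show "\<delta> > 0" by (rule d(1))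
    fix k :: nat assume k: "k \<ge> 1"
    have "J k - 1 \<le> k" using Jp[OF k] by linarith
    then have "P (J k - 1) \<le> P k" by (rule Pmono)
    then have "\<delta> * real (P (J k - 1)) \<le> \<delta> * real (P k)" using d(1) by simp
    then show "(g+\<delta>) * real (Ptag g (jidx g k - 1)) \<le> real (Ptag g k)"
    proof -
      have "\<delta> * real (P k) \<le> F k" using all k by simp
      then have "(g+\<delta>) * real (P (J k - 1)) \<le> real (P k)"
        using \<open>\<delta> * real (P (J k - 1)) \<le> \<delta> * real (P k)\<close> unfolding F_def by (simp add: algebra_simps)
      then show ?thesis unfolding P_def J_def .
    qed
  qed
qed


lemma same_seq:
  assumes b: "\<beta> \<ge> 1" and a: "\<alpha> \<ge> 1"
    and c: "\<And>k. k \<ge> 1 \<Longrightarrow> \<beta> * real (Ptag \<alpha> (jidx \<alpha> k - 1)) < real (Ptag \<alpha> k)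
           \<and> real (Ptag \<alpha> k) \<le> \<beta> * real (Ptag \<alpha> (jidx \<alpha> k))"
  shows "Ptag \<beta> = Ptag \<alpha>"
proof -
  have "\<forall>i\<le>n. Ptag \<beta> i = Ptag \<alpha> i" for n
  proof (induction n)
    case 0 then show ?case by (simp add: Ptag0)
  next
    case (Suc n)
    have "Ptag \<beta> (Suc n) = Ptag \<alpha> (Suc n)"
    proof (cases "n = 0")
      case True then show ?thesis using Ptag1 by simp
    next
      case False
      then have n1: "n \<ge> 1" by simp
      let ?J = "jidx \<alpha> n"
      have Jp: "1 \<le> ?J" "?J \<le> n" using jidx_props[OF a n1] by auto
      have e1: "Ptag \<beta> (?J - 1) = Ptag \<alpha> (?J - 1)" using Suc.IH Jp by simp
      have e2: "Ptag \<beta> ?J = Ptag \<alpha> ?J" using Suc.IH Jp by simp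
      have e3: "Ptag \<beta> n = Ptag \<alpha> n" using Suc.IH by simp
      have "?J = jidx \<beta> n"
        by (rule jidx_unique[OF b n1 Jp(1)]) (use c[OF n1] e1 e2 e3 in simp_all)
      then show ?thesis using Ptag_step'[OF b n1] Ptag_step'[OF a n1] e2 e3 by simp
    qed
    then show ?case using Suc.IH le_Suc_eq by auto
  qed
  then show ?thesis by auto
qed

lemma same_jidx:
  assumes b: "\<beta> \<ge> 1" and a: "\<alpha> \<ge> 1" and e: "Ptag \<beta> = Ptag \<alpha>" and k: "k \<ge> 1"
  shows "jidx \<beta> k = jidx \<alpha> k"
proof -
  have "Ptag \<alpha> (jidx \<beta> k) = Ptag \<alpha> (jidx \<alpha> k)"
    using Ptag_step'[OF b k] Ptag_step'[OF a k] e by simp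
  then show ?thesis using Ptag_smono[OF a] by (simp add: strict_mono_eq)
qed

theorem mainTheorem1:
  fixes \<alpha> :: real
  assumes "\<alpha> \<ge> 1"
  shows "\<exists>\<alpha>0 \<alpha>1. \<alpha>0 \<le> \<alpha> \<and> \<alpha> < \<alpha>1 \<and>
           (\<forall>\<beta>\<in>{\<alpha>0..<\<alpha>1}. Ptag \<beta> = Ptag \<alpha>) \<and>
           (\<forall>\<beta>. \<beta> \<ge> 1 \<and> \<beta> \<notin> {\<alpha>0..<\<alpha>1} \<longrightarrow> (\<exists>i. Ptag \<alpha> i \<noteq> Ptag \<beta> i))"
proof -
  note a = assms
  define P where "P = Ptag \<alpha>"
  define J where "J = jidx \<alpha>"
  have sm: "strict_mono P" unfolding P_def by (rule Ptag_smono[OF a])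
  have Jp: "\<And>k. k \<ge> 1 \<Longrightarrow> 1 \<le> J k \<and> J k \<le> k \<and> \<alpha> * real (P (J k - 1)) < real (P k)
      \<and> real (P k) \<le> \<alpha> * real (P (J k))"
    unfolding P_def J_def by (rule jidx_props[OF a])
  have Ppos: "\<And>k. k \<ge> 1 \<Longrightarrow> real (P k) > 0"
  proof -
    fix k :: nat assume "k \<ge> 1"
    then have "P 0 < P k" using sm by (simp add: strict_mono_less)
    then show "real (P k) > 0" by (simp add: P_def Ptag0)
  qed
  define L where "L = {real (P k) / real (P (J k)) | k. k \<ge> 1}"
  define U where "U = {real (P k) / real (P (J k - 1)) | k. k \<ge> 1 \<and> J k \<ge> 2}"
  define a0 where "a0 = Sup L"
  define a1 where "a1 = Inf U"
  have Lle: "\<And>x. x \<in> L \<Longrightarrow> x \<le> \<alpha>"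
  proof -
    fix x assume "x \<in> L"
    then obtain k where k: "k \<ge> 1" "x = real (P k) / real (P (J k))" unfolding L_def by auto
    have "J k \<ge> 1" using Jp[OF k(1)] by simp
    then show "x \<le> \<alpha>" using k Jp[OF k(1)] Ppos[of "J k"] by (simp add: divide_le_eq)
  qed
  have L1: "1 \<in> L"
  proof -
    have "J 1 = 1" using Jp[of 1] by simp
    then have "real (P 1) / real (P (J 1)) = 1" by (simp add: P_def Ptag1 Ptag1')
    then show ?thesis unfolding L_def by force
  qed
  have Lne: "L \<noteq> {}" using L1 by blast
  have Lbdd: "bdd_above L" by (rule bdd_aboveI[of _ \<alpha>]) (rule Lle)
  have a0le: "a0 \<le> \<alpha>" unfolding a0_def by (rule cSup_least[OF Lne]) (rule Lle)
  have a0ge: "1 \<le> a0" unfolding a0_def by (rule cSup_upper[OF L1 Lbdd])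
  have Lupper: "\<And>k. k \<ge> 1 \<Longrightarrow> real (P k) / real (P (J k)) \<le> a0"
    unfolding a0_def using Lbdd by (intro cSup_upper) (auto simp: L_def)
  have Une: "U \<noteq> {}"
  proof
    assume "U = {}"
    then have J1: "\<And>k. k \<ge> 1 \<Longrightarrow> J k = 1" unfolding U_def using Jp by fastforce
    have Pk: "k \<ge> 1 \<Longrightarrow> P k = k" for k
    proof (induction k rule: nat_induct_at_least)
      case base then show ?case by (simp add: P_def Ptag1 Ptag1')
    next
      case (Suc n)
      then show ?case using Ptag_step'[OF a Suc(1)] J1[OF Suc(1)] unfolding P_def J_def
        by (simp add: Ptag1')
    qed
    define k where "k = nat \<lceil>\<alpha>\<rceil> + 1"
    have k1: "k \<ge> 1" by (simp add: k_def)
    have "real (P k) \<le> \<alpha> * real (P (J k))" using Jp[OF k1] by simp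
    then have "real k \<le> \<alpha>" using Pk[OF k1] J1[OF k1] Pk[of 1] by simp
    moreover have "real k > \<alpha>" unfolding k_def by linarith
    ultimately show False by simp
  qed
  obtain \<delta> where d: "\<delta> > 0" "\<And>k. k \<ge> 1 \<Longrightarrow> (\<alpha>+\<delta>) * real (P (J k - 1)) \<le> real (P k)"
    using key[OF a] unfolding P_def J_def by blast
  have Uge: "\<And>x. x \<in> U \<Longrightarrow> \<alpha> + \<delta> \<le> x"
  proof -
    fix x assume "x \<in> U"
    then obtain k where k: "k \<ge> 1" "J k \<ge> 2" "x = real (P k) / real (P (J k - 1))" unfolding U_def by auto
    have "J k - 1 \<ge> 1" using k by simp
    then show "\<alpha> + \<delta> \<le> x" using k d(2)[OF k(1)] Ppos[of "J k - 1"] by (simp add: le_divide_eq)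
  qed
  have Ubdd: "bdd_below U" by (rule bdd_belowI[of _ "\<alpha> + \<delta>"]) (rule Uge)
  have a1ge: "\<alpha> + \<delta> \<le> a1" unfolding a1_def by (rule cInf_greatest[OF Une]) (rule Uge)
  have Ulower: "\<And>k. k \<ge> 1 \<Longrightarrow> J k \<ge> 2 \<Longrightarrow> a1 \<le> real (P k) / real (P (J k - 1))"
    unfolding a1_def using Ubdd by (intro cInf_lower) (auto simp: U_def)
  show ?thesis
  proof (rule exI[of _ a0], rule exI[of _ a1], intro conjI ballI allI impI)
    show "a0 \<le> \<alpha>" by (rule a0le)
  next
    show "\<alpha> < a1" using a1ge d(1) by simp
  next
    fix \<beta> assume "\<beta> \<in> {a0..<a1}"
    then have b: "a0 \<le> \<beta>" "\<beta> < a1" by auto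
    have b1: "\<beta> \<ge> 1" using b a0ge by simp
    show "Ptag \<beta> = Ptag \<alpha>"
    proof (rule same_seq[OF b1 a])
      fix k :: nat assume k: "k \<ge> 1"
      have Jk: "J k \<ge> 1" using Jp[OF k] by simp
      have up: "real (P k) \<le> \<beta> * real (P (J k))"
      proof -
        have "real (P k) \<le> a0 * real (P (J k))" using Lupper[OF k] Ppos[OF Jk] by (simp add: divide_le_eq)
        also have "\<dots> \<le> \<beta> * real (P (J k))" using b(1) Ppos[OF Jk] by (intro mult_right_mono) auto
        finally show ?thesis .
      qed
      have lo: "\<beta> * real (P (J k - 1)) < real (P k)"
      proof (cases "J k \<ge> 2")
        case True
        have "J k - 1 \<ge> 1" using True by simp
        then have pp: "real (P (J k - 1)) > 0" by (rule Ppos)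
        have "\<beta> < real (P k) / real (P (J k - 1))" using Ulower[OF k True] b(2) by simp
        then show ?thesis using pp by (simp add: less_divide_eq)
      next
        case False
        then have "J k - 1 = 0" by simp
        then show ?thesis using Ppos[OF k] by (simp add: P_def Ptag0)
      qed
      show "\<beta> * real (Ptag \<alpha> (jidx \<alpha> k - 1)) < real (Ptag \<alpha> k)
           \<and> real (Ptag \<alpha> k) \<le> \<beta> * real (Ptag \<alpha> (jidx \<alpha> k))"
        using up lo unfolding P_def J_def by simp
    qed
  next
    fix \<beta> assume h: "\<beta> \<ge> 1 \<and> \<beta> \<notin> {a0..<a1}"
    then have b1: "\<beta> \<ge> 1" by simp
    show "\<exists>i. Ptag \<alpha> i \<noteq> Ptag \<beta> i"
    proof (rule ccontr)
      assume "\<not> ?thesis"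
      then have e: "Ptag \<beta> = Ptag \<alpha>" by auto
      have sj: "\<And>k. k \<ge> 1 \<Longrightarrow> jidx \<beta> k = J k" unfolding J_def by (rule same_jidx[OF b1 a e])
      consider "\<beta> < a0" | "a1 \<le> \<beta>" using h by auto
      then show False
      proof cases
        case 1
        then obtain x where x: "x \<in> L" "\<beta> < x" unfolding a0_def using less_cSup_iff[OF Lne Lbdd] by auto
        then obtain k where k: "k \<ge> 1" "x = real (P k) / real (P (J k))" unfolding L_def by auto
        have Jk: "J k \<ge> 1" using Jp[OF k(1)] by simp
        have "\<beta> * real (P (J k)) < real (P k)" using x k Ppos[OF Jk] by (simp add: less_divide_eq)
        moreover have "real (Ptag \<beta> k) \<le> \<beta> * real (Ptag \<beta> (jidx \<beta> k))"
          using jidx_props[OF b1 k(1)] by simp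
        ultimately show False using e sj[OF k(1)] unfolding P_def by simp
      next
        case 2
        obtain \<delta>' where d': "\<delta>' > 0"
          "\<And>k. k \<ge> 1 \<Longrightarrow> (\<beta>+\<delta>') * real (Ptag \<beta> (jidx \<beta> k - 1)) \<le> real (Ptag \<beta> k)"
          using key[OF b1] by blast
        have "\<beta> + \<delta>' \<le> a1" unfolding a1_def
        proof (rule cInf_greatest[OF Une])
          fix x assume "x \<in> U"
          then obtain k where k: "k \<ge> 1" "J k \<ge> 2" "x = real (P k) / real (P (J k - 1))" unfolding U_def by auto
          have "J k - 1 \<ge> 1" using k by simp
          moreover have "(\<beta>+\<delta>') * real (P (J k - 1)) \<le> real (P k)"
            using d'(2)[OF k(1)] e sj[OF k(1)] unfolding P_def by simp
          ultimately show "\<beta> + \<delta>' \<le> x" using k Ppos[of "J k - 1"] by (simp add: le_divide_eq)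
        qed
        then show False using 2 d'(1) by simp
      qed
    qed
  qed
qed

end
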